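(* For every $A\in\mathbb{C}^{m\times n}$ and every $\alpha_0,\beta_0\in(0,\tfrac{\pi}{2})$, $$\max_{z\in S^m_{\alpha_0}}\min_{w\in S^n_{\beta_0}}\mathrm{Re}(z^*Aw)=\min_{w\in S^n_{\beta_0}}\max_{z\in S^m_{\alpha_0}}\mathrm{Re}(z^*Aw),$$ i.e. $\underline v=\overline v$. Consequently every two-player zero-sum complex game $G_{\mathcal C}(A)$ has a complex Nash equilibrium in mixed complex strategies.
   Context: For $\gamma\in(0,\tfrac{\pi}{2})$ and $p\ge 1$ let $S^p_\gamma=\{z\in\mathbb{C}^p:\ \text{for each }k,\ z_k=0\text{ or }|\arg z_k|\le\gamma,\ \sum_{k=1}^p z_k=1\}$ ($\arg$ the principal argument in $(-\pi,\pi]$). The two-player zero-sum complex game $G_{\mathcal C}(A)$, for $A=(a_{ij})\in\mathbb{C}^{m\times n}$ and strategy arguments $\alpha_0,\beta_0\in(0,\tfrac{\pi}{2})$: player I chooses $z\in S^m_{\alpha_0}$, player II chooses $w\in S^n_{\beta_0}$, player I receives $\mathrm{Re}(z^*Aw)$ and player II receives $-\mathrm{Re}(z^*Aw)$, where $z^*$ is the conjugate transpose. A pair $(z^0,w^0)\in S^m_{\alpha_0}\times S^n_{\beta_0}$ is a complex Nash equilibrium if $\mathrm{Re}(z^*Aw^0)\le\mathrm{Re}((z^0)^*Aw^0)\le\mathrm{Re}((z^0)^*Aw)$ for all $z\in S^m_{\alpha_0}$, $w\in S^n_{\beta_0}$. *)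

theory Defs
  imports "HOL-Analysis.Analysis"
begin

definition cstrat :: "real \<Rightarrow> (complex ^ 'p::finite) set" where
  "cstrat \<gamma> = {z. (\<forall>k. z $ k = 0 \<or> \<bar>Arg (z $ k)\<bar> \<le> \<gamma>) \<and> (\<Sum>k\<in>UNIV. z $ k) = 1}"

definition cpayoff :: "complex ^ 'n::finite ^ 'm::finite \<Rightarrow> complex ^ 'm \<Rightarrow> complex ^ 'n \<Rightarrow> real" where
  "cpayoff A z w = Re (\<Sum>i\<in>UNIV. \<Sum>j\<in>UNIV. cnj (z $ i) * A $ i $ j * w $ j)"

definition complex_nash :: "complex ^ 'n::finite ^ 'm::finite \<Rightarrow> real \<Rightarrow> real \<Rightarrow> complex ^ 'm \<Rightarrow> complex ^ 'n \<Rightarrow> bool" where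
  "complex_nash A \<alpha>0 \<beta>0 z0 w0 \<longleftrightarrow> z0 \<in> cstrat \<alpha>0 \<and> w0 \<in> cstrat \<beta>0 \<and>
     (\<forall>z\<in>cstrat \<alpha>0. cpayoff A z w0 \<le> cpayoff A z0 w0) \<and>
     (\<forall>w\<in>cstrat \<beta>0. cpayoff A z0 w0 \<le> cpayoff A z0 w)"

end

theory Submission
  imports Defs
begin

lemma cone_iff:
  fixes g :: real and c :: complex
  assumes g: "0 < g" "g < pi/2"
  shows "(c = 0 \<or> \<bar>Arg c\<bar> \<le> g) \<longleftrightarrow> (0 \<le> Re c \<and> \<bar>Im c\<bar> \<le> tan g * Re c)"
proof (cases "c = 0")
  case True then show ?thesis by simp
next
  case False
  have key: "\<bar>arctan y\<bar> \<le> g \<longleftrightarrow> \<bar>y\<bar> \<le> tan g" for y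
  proof -
    have t1: "arctan (tan g) = g" using g by (intro arctan_tan) auto
    have t2: "arctan (- tan g) = - g" using t1 by (simp add: arctan_minus)
    have "\<bar>arctan y\<bar> \<le> g \<longleftrightarrow> arctan (- tan g) \<le> arctan y \<and> arctan y \<le> arctan (tan g)"
      using t1 t2 by auto
    also have "\<dots> \<longleftrightarrow> - tan g \<le> y \<and> y \<le> tan g" by (simp add: arctan_le_iff)
    finally show ?thesis by auto
  qed
  show ?thesis
  proof
    assume "c = 0 \<or> \<bar>Arg c\<bar> \<le> g"
    then have a: "\<bar>Arg c\<bar> \<le> g" using False by auto
    then have "\<bar>Arg c\<bar> < pi/2" using g by auto
    then have re: "Re c > 0" using Arg_Re_pos False by auto
    then have "\<bar>arctan (Im c / Re c)\<bar> \<le> g" using a arg_conv_arctan by simp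
    then have "\<bar>Im c / Re c\<bar> \<le> tan g" using key by blast
    then have "\<bar>Im c\<bar> / Re c \<le> tan g" using re by simp
    then show "0 \<le> Re c \<and> \<bar>Im c\<bar> \<le> tan g * Re c" using re by (simp add: divide_le_eq)
  next
    assume h: "0 \<le> Re c \<and> \<bar>Im c\<bar> \<le> tan g * Re c"
    have re: "Re c > 0"
    proof (rule ccontr)
      assume "\<not> Re c > 0"
      then have "Re c = 0" using h by auto
      then have "Im c = 0" using h by auto
      then show False using False \<open>Re c = 0\<close> complex_eqI by force
    qed
    then have "\<bar>Im c\<bar> / Re c \<le> tan g" using h by (simp add: divide_le_eq mult.commute)
    then have "\<bar>Im c / Re c\<bar> \<le> tan g" using re by simp
    then have "\<bar>arctan (Im c / Re c)\<bar> \<le> g" using key by blast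
    then show "c = 0 \<or> \<bar>Arg c\<bar> \<le> g" using re arg_conv_arctan by simp
  qed
qed

lemma cstrat_eq:
  assumes "0 < g" "g < pi/2"
  shows "cstrat g = {z :: complex ^ 'p::finite. (\<forall>k. 0 \<le> Re (z$k) \<and> \<bar>Im (z$k)\<bar> \<le> tan g * Re (z$k)) \<and> (\<Sum>k\<in>UNIV. z $ k) = 1}"
  unfolding cstrat_def using cone_iff[OF assms] by auto

lemma cstrat_closed:
  assumes "0 < g" "g < pi/2"
  shows "closed (cstrat g :: (complex ^ 'p::finite) set)"
  unfolding cstrat_eq[OF assms]
  by (intro closed_Collect_conj closed_Collect_all closed_Collect_le closed_Collect_eq continuous_intros)

lemma cstrat_bounded:
  assumes "0 < g" "g < pi/2"
  shows "bounded (cstrat g :: (complex ^ 'p::finite) set)"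
proof -
  let ?t = "tan g"
  have "norm z \<le> real CARD('p) * (1 + ?t)" if z: "z \<in> (cstrat g :: (complex ^ 'p) set)" for z
  proof -
    from z have c: "\<And>k. 0 \<le> Re (z$k) \<and> \<bar>Im (z$k)\<bar> \<le> ?t * Re (z$k)" and s: "(\<Sum>k\<in>UNIV. z $ k) = 1"
      unfolding cstrat_eq[OF assms] by auto
    have t0: "?t \<ge> 0" using assms by (simp add: tan_pos_pi2_le)
    have sr: "(\<Sum>k\<in>UNIV. Re (z $ k)) = 1" using arg_cong[OF s, of Re] by (simp add: Re_sum)
    have le1: "Re (z$k) \<le> 1" for k
    proof -
      have "Re (z$k) \<le> (\<Sum>k\<in>UNIV. Re (z $ k))" by (rule member_le_sum) (use c in auto)
      then show ?thesis using sr by simp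
    qed
    have nk: "norm (z$k) \<le> 1 + ?t" for k
    proof -
      have "norm (z$k) \<le> \<bar>Re (z$k)\<bar> + \<bar>Im (z$k)\<bar>" by (rule cmod_le)
      also have "\<dots> \<le> 1 + ?t * 1"
      proof -
        have "?t * Re (z$k) \<le> ?t * 1" using le1[of k] t0 by (rule mult_left_mono)
        then show ?thesis using c[of k] le1[of k] by linarith
      qed
      finally show ?thesis by simp
    qed
    have "norm z \<le> (\<Sum>k\<in>UNIV. norm (z$k))" unfolding norm_vec_def by (rule L2_set_le_sum) auto
    also have "\<dots> \<le> (\<Sum>k\<in>(UNIV::'p set). 1 + ?t)" by (rule sum_mono) (rule nk)
    finally show ?thesis by simp
  qed
  then show ?thesis unfolding bounded_iff by blast
qed

lemma cstrat_compact:
  assumes "0 < g" "g < pi/2"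
  shows "compact (cstrat g :: (complex ^ 'p::finite) set)"
  using cstrat_closed[OF assms] cstrat_bounded[OF assms] compact_eq_bounded_closed by blast

lemma cstrat_convex:
  assumes "0 < g" "g < pi/2"
  shows "convex (cstrat g :: (complex ^ 'p::finite) set)"
  unfolding cstrat_eq[OF assms] convex_def
proof (intro ballI allI impI)
  fix x y :: "complex ^ 'p" and u v :: real
  assume xm: "x \<in> {z. (\<forall>k. 0 \<le> Re (z$k) \<and> \<bar>Im (z$k)\<bar> \<le> tan g * Re (z$k)) \<and> (\<Sum>k\<in>UNIV. z $ k) = 1}"
     and ym: "y \<in> {z. (\<forall>k. 0 \<le> Re (z$k) \<and> \<bar>Im (z$k)\<bar> \<le> tan g * Re (z$k)) \<and> (\<Sum>k\<in>UNIV. z $ k) = 1}"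
     and uv: "0 \<le> u" "0 \<le> v" "u + v = 1"
  from xm have x: "\<And>k. 0 \<le> Re (x $ k) \<and> \<bar>Im (x $ k)\<bar> \<le> tan g * Re (x $ k)" "(\<Sum>k\<in>UNIV. x $ k) = 1" by auto
  from ym have y: "\<And>k. 0 \<le> Re (y $ k) \<and> \<bar>Im (y $ k)\<bar> \<le> tan g * Re (y $ k)" "(\<Sum>k\<in>UNIV. y $ k) = 1" by auto
  have c: "0 \<le> Re ((u *\<^sub>R x + v *\<^sub>R y) $ k) \<and> \<bar>Im ((u *\<^sub>R x + v *\<^sub>R y) $ k)\<bar> \<le> tan g * Re ((u *\<^sub>R x + v *\<^sub>R y) $ k)" for k
  proof -
    have a: "\<bar>u * Im (x $ k)\<bar> \<le> u * (tan g * Re (x $ k))" using x(1)[of k] uv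
      by (simp add: abs_mult mult_left_mono)
    have b: "\<bar>v * Im (y $ k)\<bar> \<le> v * (tan g * Re (y $ k))" using y(1)[of k] uv
      by (simp add: abs_mult mult_left_mono)
    have "0 \<le> u * Re (x $ k) + v * Re (y $ k)" using x(1)[of k] y(1)[of k] uv by simp
    moreover have "\<bar>u * Im (x $ k) + v * Im (y $ k)\<bar> \<le> tan g * (u * Re (x $ k) + v * Re (y $ k))"
      using a b by (smt (verit) abs_triangle_ineq distrib_left mult.left_commute)
    ultimately show ?thesis by simp
  qed
  have "(\<Sum>k\<in>UNIV. (u *\<^sub>R x + v *\<^sub>R y) $ k) = u *\<^sub>R (\<Sum>k\<in>UNIV. x $ k) + v *\<^sub>R (\<Sum>k\<in>UNIV. y $ k)"
    by (simp add: sum.distrib scaleR_sum_right)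
  also have "\<dots> = 1" using x(2) y(2) uv by (metis scaleR_add_left scaleR_one)
  finally show "u *\<^sub>R x + v *\<^sub>R y \<in> {z. (\<forall>k. 0 \<le> Re (z$k) \<and> \<bar>Im (z$k)\<bar> \<le> tan g * Re (z$k)) \<and> (\<Sum>k\<in>UNIV. z $ k) = 1}"
    using c by blast
qed

lemma cstrat_nonempty:
  assumes "0 < g" "g < pi/2"
  shows "(cstrat g :: (complex ^ 'p::finite) set) \<noteq> {}"
proof -
  have "(\<chi> k. complex_of_real (1 / real CARD('p))) \<in> (cstrat g :: (complex ^ 'p) set)"
    unfolding cstrat_eq[OF assms] using assms by (simp add: tan_pos_pi2_le)
  then show ?thesis by blast
qed

definition av :: "complex ^ 'n::finite ^ 'm::finite \<Rightarrow> complex ^ 'n \<Rightarrow> complex ^ 'm" where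
  "av A w = (\<chi> i. \<Sum>j\<in>UNIV. A $ i $ j * w $ j)"
definition bv :: "complex ^ 'n::finite ^ 'm::finite \<Rightarrow> complex ^ 'm \<Rightarrow> complex ^ 'n" where
  "bv A z = (\<chi> j. \<Sum>i\<in>UNIV. cnj (A $ i $ j) * z $ i)"

lemma Re_cnj_mult: "Re (cnj u * v) = inner u v"
  by (simp add: inner_complex_def)

lemma pay1: "cpayoff A z w = inner z (av A w)"
proof -
  have "cpayoff A z w = Re (\<Sum>i\<in>UNIV. cnj (z $ i) * (av A w $ i))"
    unfolding cpayoff_def av_def by (simp add: sum_distrib_left mult.assoc)
  also have "\<dots> = (\<Sum>i\<in>UNIV. inner (z $ i) (av A w $ i))"
    by (simp add: Re_sum inner_complex_def)
  finally show ?thesis by (simp add: inner_vec_def)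
qed

lemma pay2: "cpayoff A z w = inner (bv A z) w"
proof -
  have e: "(\<Sum>i\<in>UNIV. cnj (z $ i) * A $ i $ j * w $ j) = cnj (bv A z $ j) * w $ j" for j
  proof -
    have "cnj (bv A z $ j) = (\<Sum>i\<in>UNIV. cnj (z $ i) * A $ i $ j)"
      by (simp add: bv_def mult.commute)
    then show ?thesis by (simp add: sum_distrib_right)
  qed
  have "cpayoff A z w = Re (\<Sum>j\<in>UNIV. \<Sum>i\<in>UNIV. cnj (z $ i) * A $ i $ j * w $ j)"
    unfolding cpayoff_def by (subst sum.swap) (rule refl)
  also have "\<dots> = Re (\<Sum>j\<in>UNIV. cnj (bv A z $ j) * w $ j)"
    using e by simp
  also have "\<dots> = (\<Sum>j\<in>UNIV. inner (bv A z $ j) (w $ j))"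
    by (simp add: Re_sum inner_complex_def)
  finally show ?thesis by (simp add: inner_vec_def)
qed

lemma av_linear: "linear (av A)"
  by (rule linearI) (simp_all add: av_def vec_eq_iff distrib_left sum.distrib
      scaleR_sum_right mult_scaleR_right)

lemma bv_linear: "linear (bv A)"
  by (rule linearI) (simp_all add: bv_def vec_eq_iff distrib_left sum.distrib
      scaleR_sum_right mult_scaleR_right)

lemma av_cont: "continuous_on S (av A)"
  by (rule linear_continuous_on) (simp add: av_linear linear_conv_bounded_linear[symmetric])

lemma bv_cont: "continuous_on S (bv A)"
  by (rule linear_continuous_on) (simp add: bv_linear linear_conv_bounded_linear[symmetric])

lemma nash_exists:
  fixes A :: "complex ^ 'n::finite ^ 'm::finite"
  assumes "0 < \<alpha>0" "\<alpha>0 < pi / 2" "0 < \<beta>0" "\<beta>0 < pi / 2"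
  shows "\<exists>z0 w0. complex_nash A \<alpha>0 \<beta>0 z0 w0"
proof -
  define Z where "Z = (cstrat \<alpha>0 :: (complex ^ 'm) set)"
  define W where "W = (cstrat \<beta>0 :: (complex ^ 'n) set)"
  have Zc: "compact Z" "convex Z" "Z \<noteq> {}" "closed Z"
    unfolding Z_def using assms cstrat_compact cstrat_convex cstrat_nonempty cstrat_closed by auto
  have Wc: "compact W" "convex W" "W \<noteq> {}" "closed W"
    unfolding W_def using assms cstrat_compact cstrat_convex cstrat_nonempty cstrat_closed by auto
  define F where "F = (\<lambda>p :: (complex ^ 'm) \<times> (complex ^ 'n).
     (closest_point Z (fst p + av A (snd p)), closest_point W (snd p - bv A (fst p))))"
  have c1: "continuous_on (Z \<times> W) (\<lambda>p :: (complex ^ 'm) \<times> (complex ^ 'n). fst p + av A (snd p))"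
    by (intro continuous_on_add continuous_on_fst continuous_on_id continuous_on_compose2[OF av_cont continuous_on_snd]) auto
  have c2: "continuous_on (Z \<times> W) (\<lambda>p :: (complex ^ 'm) \<times> (complex ^ 'n). snd p - bv A (fst p))"
    by (intro continuous_on_diff continuous_on_snd continuous_on_id continuous_on_compose2[OF bv_cont continuous_on_fst]) auto
  have cF: "continuous_on (Z \<times> W) F"
    unfolding F_def
    by (intro continuous_on_Pair continuous_on_compose2[OF continuous_on_closest_point[OF Zc(2,4,3), of UNIV] c1]
        continuous_on_compose2[OF continuous_on_closest_point[OF Wc(2,4,3), of UNIV] c2]) auto
  have FS: "F \<in> Z \<times> W \<rightarrow> Z \<times> W"
    unfolding F_def using closest_point_in_set[OF Zc(4,3)] closest_point_in_set[OF Wc(4,3)] by auto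
  obtain p where p: "p \<in> Z \<times> W" "F p = p"
    using brouwer[OF compact_Times[OF Zc(1) Wc(1)] convex_Times[OF Zc(2) Wc(2)] _ cF FS] Zc(3) Wc(3) by blast
  obtain z0 w0 where pz: "p = (z0, w0)" by (cases p)
  have z0: "z0 \<in> Z" and w0: "w0 \<in> W" using p pz by auto
  have fz: "closest_point Z (z0 + av A w0) = z0" and fw: "closest_point W (w0 - bv A z0) = w0"
    using p(2) unfolding pz F_def by auto
  have "cpayoff A z w0 \<le> cpayoff A z0 w0" if z: "z \<in> Z" for z
  proof -
    have "inner ((z0 + av A w0) - z0) (z - z0) \<le> 0"
      using any_closest_point_dot[OF Zc(2,4) z0 z, of "z0 + av A w0"]
        closest_point_exists(2)[OF Zc(4,3), of "z0 + av A w0"] fz by simp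
    then show ?thesis unfolding pay1 by (simp add: inner_diff_left inner_commute)
  qed
  moreover have "cpayoff A z0 w0 \<le> cpayoff A z0 w" if w: "w \<in> W" for w
  proof -
    have "inner ((w0 - bv A z0) - w0) (w - w0) \<le> 0"
      using any_closest_point_dot[OF Wc(2,4) w0 w, of "w0 - bv A z0"]
        closest_point_exists(2)[OF Wc(4,3), of "w0 - bv A z0"] fw by simp
    then show ?thesis unfolding pay2 by (simp add: inner_diff_right)
  qed
  ultimately show ?thesis unfolding complex_nash_def using z0 w0 Z_def W_def by blast
qed

theorem theorem5p2:
  fixes A :: "complex ^ 'n::finite ^ 'm::finite" and \<alpha>0 \<beta>0 :: real
  assumes "0 < \<alpha>0" "\<alpha>0 < pi / 2" "0 < \<beta>0" "\<beta>0 < pi / 2"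
  shows
    "(\<forall>z\<in>cstrat \<alpha>0. \<exists>w0\<in>cstrat \<beta>0. \<forall>w\<in>cstrat \<beta>0. cpayoff A z w0 \<le> cpayoff A z w)
   \<and> (\<forall>w\<in>cstrat \<beta>0. \<exists>z0\<in>cstrat \<alpha>0. \<forall>z\<in>cstrat \<alpha>0. cpayoff A z w \<le> cpayoff A z0 w)
   \<and> (\<exists>z0\<in>cstrat \<alpha>0. \<forall>z\<in>cstrat \<alpha>0.
         (INF w\<in>cstrat \<beta>0. cpayoff A z w) \<le> (INF w\<in>cstrat \<beta>0. cpayoff A z0 w))
   \<and> (\<exists>w0\<in>cstrat \<beta>0. \<forall>w\<in>cstrat \<beta>0.
         (SUP z\<in>cstrat \<alpha>0. cpayoff A z w0) \<le> (SUP z\<in>cstrat \<alpha>0. cpayoff A z w))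
   \<and> (SUP z\<in>cstrat \<alpha>0. INF w\<in>cstrat \<beta>0. cpayoff A z w)
       = (INF w\<in>cstrat \<beta>0. SUP z\<in>cstrat \<alpha>0. cpayoff A z w)
   \<and> (\<exists>z0 w0. complex_nash A \<alpha>0 \<beta>0 z0 w0)"
proof -
  define Z where "Z = (cstrat \<alpha>0 :: (complex ^ 'm) set)"
  define W where "W = (cstrat \<beta>0 :: (complex ^ 'n) set)"
  have Zc: "compact Z" "Z \<noteq> {}"
    unfolding Z_def using assms cstrat_compact cstrat_nonempty by auto
  have Wc: "compact W" "W \<noteq> {}"
    unfolding W_def using assms cstrat_compact cstrat_nonempty by auto
  have cw: "continuous_on S (\<lambda>w. cpayoff A z w)" for S z
    unfolding pay1 by (intro continuous_on_inner continuous_on_const av_cont)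
  have cz: "continuous_on S (\<lambda>z. cpayoff A z w)" for S w
    unfolding pay1 by (intro continuous_on_inner continuous_on_const continuous_on_id)
  have C1: "\<forall>z\<in>Z. \<exists>w0\<in>W. \<forall>w\<in>W. cpayoff A z w0 \<le> cpayoff A z w"
    using continuous_attains_inf[OF Wc cw] by blast
  have C2: "\<forall>w\<in>W. \<exists>z0\<in>Z. \<forall>z\<in>Z. cpayoff A z w \<le> cpayoff A z0 w"
    using continuous_attains_sup[OF Zc cz] by blast
  obtain z0 w0 where N: "complex_nash A \<alpha>0 \<beta>0 z0 w0" using nash_exists[OF assms] by blast
  then have z0: "z0 \<in> Z" and w0: "w0 \<in> W"
    and Nz: "\<And>z. z \<in> Z \<Longrightarrow> cpayoff A z w0 \<le> cpayoff A z0 w0"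
    and Nw: "\<And>w. w \<in> W \<Longrightarrow> cpayoff A z0 w0 \<le> cpayoff A z0 w"
    unfolding complex_nash_def Z_def W_def by auto
  define v where "v = cpayoff A z0 w0"
  have I0: "(INF w\<in>W. cpayoff A z0 w) = v"
    unfolding v_def by (rule cInf_eq_minimum) (use w0 Nw in auto)
  have S0: "(SUP z\<in>Z. cpayoff A z w0) = v"
    unfolding v_def by (rule cSup_eq_maximum) (use z0 Nz in auto)
  have Iz: "(INF w\<in>W. cpayoff A z w) \<le> v" if z: "z \<in> Z" for z
  proof -
    obtain w1 where w1: "w1 \<in> W" "\<forall>w\<in>W. cpayoff A z w1 \<le> cpayoff A z w" using C1 z by blast
    have "(INF w\<in>W. cpayoff A z w) = cpayoff A z w1"
      by (rule cInf_eq_minimum) (use w1 in auto)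
    also have "\<dots> \<le> cpayoff A z w0" using w1 w0 by auto
    also have "\<dots> \<le> v" using Nz[OF z] v_def by simp
    finally show ?thesis .
  qed
  have Sw: "v \<le> (SUP z\<in>Z. cpayoff A z w)" if w: "w \<in> W" for w
  proof -
    obtain z1 where z1: "z1 \<in> Z" "\<forall>z\<in>Z. cpayoff A z w \<le> cpayoff A z1 w" using C2 w by blast
    have "v \<le> cpayoff A z0 w" using Nw[OF w] v_def by simp
    also have "\<dots> \<le> cpayoff A z1 w" using z1 z0 by auto
    also have "\<dots> = (SUP z\<in>Z. cpayoff A z w)"
      by (rule cSup_eq_maximum[symmetric]) (use z1 in auto)
    finally show ?thesis .
  qed
  have C3: "\<exists>z0\<in>Z. \<forall>z\<in>Z. (INF w\<in>W. cpayoff A z w) \<le> (INF w\<in>W. cpayoff A z0 w)"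
    using z0 I0 Iz by auto
  have C4: "\<exists>w0\<in>W. \<forall>w\<in>W. (SUP z\<in>Z. cpayoff A z w0) \<le> (SUP z\<in>Z. cpayoff A z w)"
    using w0 S0 Sw by auto
  have L: "(SUP z\<in>Z. INF w\<in>W. cpayoff A z w) = v"
    by (rule cSup_eq_maximum) (use z0 I0 Iz in auto)
  have R: "(INF w\<in>W. SUP z\<in>Z. cpayoff A z w) = v"
    by (rule cInf_eq_minimum) (use w0 S0 Sw in auto)
  show ?thesis
    using C1 C2 C3 C4 L R N unfolding Z_def W_def by auto
qed

end
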